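(* Consider the two-layer system $$\dot{\mathbf{q}}=\mathbf{f}_0(\mathbf{q})+\mathbf{g}_0(\mathbf{q})\boldsymbol{\xi},\qquad \dot{\boldsymbol{\xi}}=\mathbf{f}_1(\mathbf{q},\boldsymbol{\xi})+\mathbf{g}_1(\mathbf{q},\boldsymbol{\xi})\mathbf{u},$$ with $\mathbf{q}\in\mathbb{R}^n$, $\boldsymbol{\xi}\in\mathbb{R}^p$, $\mathbf{u}\in\mathbb{R}^m$ and locally Lipschitz $\mathbf{f}_0,\mathbf{g}_0,\mathbf{f}_1,\mathbf{g}_1$. Let $h_0:\mathbb{R}^n\to\mathbb{R}$ be continuously differentiable, with $\mathcal{C}_0=\{\mathbf{q}:h_0(\mathbf{q})\ge0\}$. Suppose there exist a continuously differentiable $\mathbf{k}_0:\mathbb{R}^n\to\mathbb{R}^p$ and constants $\alpha,\varepsilon>0$ such that for all $\mathbf{q}$ $$L_{\mathbf{f}_0}h_0(\mathbf{q})+L_{\mathbf{g}_0}h_0(\mathbf{q})\mathbf{k}_0(\mathbf{q})\ge-\alpha h_0(\mathbf{q})+\tfrac{1}{\varepsilon}\|L_{\mathbf{g}_0}h_0(\mathbf{q})\|^2.$$ Suppose further there exist a tracking controller $\mathbf{k}:\mathbb{R}^n\times\mathbb{R}^p\to\mathbb{R}^m$, a continuously differentiable $V:\mathbb{R}^n\times\mathbb{R}^p\to\mathbb{R}_{\ge0}$ and constants $\gamma_1,\gamma_2,\gamma,\delta>0$ such that for all $(\mathbf{q},\boldsymbol{\xi})$: $\gamma_1\|\boldsymbol{\xi}-\mathbf{k}_0(\mathbf{q})\|^2\le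 V(\mathbf{q},\boldsymbol{\xi})\le\gamma_2\|\boldsymbol{\xi}-\mathbf{k}_0(\mathbf{q})\|^2$ and $\dot V(\mathbf{q},\boldsymbol{\xi})\le-\gamma V(\mathbf{q},\boldsymbol{\xi})+\delta$ along the closed-loop system with $\mathbf{u}=\mathbf{k}(\mathbf{q},\boldsymbol{\xi})$. Let $\mu>0$, $$h(\mathbf{q},\boldsymbol{\xi})=h_0(\mathbf{q})-\frac{1}{\mu\gamma_1}\Big(V(\mathbf{q},\boldsymbol{\xi})-\frac{\delta}{\alpha}\Big),\qquad \mathcal{C}=\{(\mathbf{q},\boldsymbol{\xi}):h(\mathbf{q},\boldsymbol{\xi})\ge0\}.$$ If $\gamma\ge\alpha+\frac{\varepsilon\mu}{4}$, then $\mathcal{C}$ is forward invariant for the closed-loop system with $\mathbf{u}=\mathbf{k}(\mathbf{q},\boldsymbol{\xi})$.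
   Context: $L_{\mathbf{f}_0}h_0=\nabla h_0\cdot\mathbf{f}_0$, $L_{\mathbf{g}_0}h_0=\nabla h_0^\top\mathbf{g}_0$; $\dot V$ denotes the derivative of $V$ along the closed-loop vector field. A set is forward invariant if every closed-loop trajectory starting in it remains in it on its maximal interval of existence. *)

theory Defs
  imports "HOL-Analysis.Analysis"
begin

definition locally_lipschitz :: "('a::metric_space \<Rightarrow> 'b::metric_space) \<Rightarrow> bool" where
  "locally_lipschitz f \<longleftrightarrow> (\<forall>x. \<exists>e>0. \<exists>L. L-lipschitz_on (ball x e) f)"

definition C1_fun :: "('a::real_normed_vector \<Rightarrow> 'b::real_normed_vector) \<Rightarrow> bool" where
  "C1_fun f \<longleftrightarrow> (\<exists>D. (\<forall>x. (f has_derivative blinfun_apply (D x)) (at x)) \<and> continuous_on UNIV D)"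

definition lie_g :: "((real^'n) \<Rightarrow> ((real^'n) \<Rightarrow>\<^sub>L real)) \<Rightarrow> (real^'n \<Rightarrow> real^'p^'n) \<Rightarrow> real^'n \<Rightarrow> real^'p" where
  "lie_g Dh g q = (\<chi> j. blinfun_apply (Dh q) (column j (g q)))"

definition closed_loop ::
  "(real^'n \<Rightarrow> real^'n) \<Rightarrow> (real^'n \<Rightarrow> real^'p^'n) \<Rightarrow>
   (real^'n \<Rightarrow> real^'p \<Rightarrow> real^'p) \<Rightarrow> (real^'n \<Rightarrow> real^'p \<Rightarrow> real^'m^'p) \<Rightarrow>
   (real^'n \<Rightarrow> real^'p \<Rightarrow> real^'m) \<Rightarrow> (real^'n) \<times> (real^'p) \<Rightarrow> (real^'n) \<times> (real^'p)" where
  "closed_loop f0 g0 f1 g1 k = (\<lambda>(q, xi). (f0 q + g0 q *v xi, f1 q xi + g1 q xi *v k q xi))"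

text \<open>Since any solution extends to a maximal one, quantifying over all
  solutions on all intervals [0,T) is the same as quantifying over maximal solutions.\<close>
definition forward_invariant :: "('a::real_normed_vector \<Rightarrow> 'a) \<Rightarrow> 'a set \<Rightarrow> bool" where
  "forward_invariant F S \<longleftrightarrow>
     (\<forall>(x::real \<Rightarrow> 'a) (T::real). 0 < T \<longrightarrow>
        (\<forall>t\<in>{0..<T}. (x has_vector_derivative F (x t)) (at t within {0..<T})) \<longrightarrow>
        x 0 \<in> S \<longrightarrow> (\<forall>t\<in>{0..<T}. x t \<in> S))"

end

theory Submission imports Defs begin

lemma lie_dot:
  fixes Dh0 :: "(real^'n) \<Rightarrow> ((real^'n) \<Rightarrow>\<^sub>L real)" and g0 :: "real^'n \<Rightarrow> real^'p^'n"
  shows "blinfun_apply (Dh0 q) (g0 q *v xi) = lie_g Dh0 g0 q \<bullet> xi"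
proof -
  have "blinfun_apply (Dh0 q) (g0 q *v xi) = (\<Sum>i\<in>UNIV. xi$i * blinfun_apply (Dh0 q) (column i (g0 q)))"
    by (simp add: matrix_mult_sum scalar_mult_eq_scaleR blinfun.sum_right blinfun.scaleR_right)
  also have "\<dots> = lie_g Dh0 g0 q \<bullet> xi"
    by (simp add: lie_g_def inner_vec_def mult.commute)
  finally show ?thesis .
qed

lemma key_ineq:
  fixes a b Ld n m Vv Vd \<alpha> \<epsilon> \<gamma>1 \<gamma> \<delta> \<mu> h0 :: real
  assumes "a + b \<ge> -\<alpha> * h0 + (1/\<epsilon>) * n^2" "Vd \<le> -\<gamma> * Vv + \<delta>"
    "\<bar>Ld\<bar> \<le> n * m" "\<gamma>1 * m^2 \<le> Vv" "Vv \<ge> 0" "\<gamma> \<ge> \<alpha> + \<epsilon> * \<mu> / 4"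
    "\<alpha> > 0" "\<epsilon> > 0" "\<gamma>1 > 0" "\<mu> > 0" "n \<ge> 0" "m \<ge> 0"
  shows "a + (b + Ld) - (1 / (\<mu> * \<gamma>1)) * Vd + \<alpha> * (h0 - (1 / (\<mu> * \<gamma>1)) * (Vv - \<delta> / \<alpha>)) \<ge> 0"
proof -
  define c where "c = 1 / (\<mu> * \<gamma>1)"
  have c: "c > 0" using assms by (simp add: c_def)
  have 1: "c * Vd \<le> c * (-\<gamma> * Vv + \<delta>)" using c assms(2) by (simp add: mult_left_mono)
  have 2: "(\<gamma> - \<alpha>) * Vv \<ge> (\<epsilon> * \<mu> / 4) * (\<gamma>1 * m^2)"
  proof -
    have "\<epsilon> * \<mu> > 0" using assms by simp
    hence "\<epsilon> * \<mu> / 4 \<le> \<gamma> - \<alpha>" "0 \<le> \<epsilon> * \<mu> / 4" using assms(6) by linarith+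
    thus ?thesis using assms(4,5,9) by (intro mult_mono) auto
  qed
  have 3: "c * ((\<epsilon> * \<mu> / 4) * (\<gamma>1 * m^2)) = \<epsilon> * m^2 / 4" using assms by (simp add: c_def field_simps)
  have 4: "c * ((\<gamma> - \<alpha>) * Vv) \<ge> \<epsilon> * m^2 / 4" using 2 3 c
    by (metis mult_left_mono less_imp_le)
  have 5: "(1/\<epsilon>) * n^2 - n*m + \<epsilon> * m^2 / 4 \<ge> 0"
  proof -
    have "(1/\<epsilon>) * n^2 - n*m + \<epsilon> * m^2 / 4 = (1/\<epsilon>) * (n - \<epsilon>*m/2)^2"
      using assms by (simp add: field_simps power2_eq_square)
    thus ?thesis using assms by simp
  qed
  have "a + (b + Ld) - c * Vd + \<alpha> * (h0 - c * (Vv - \<delta> / \<alpha>))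
      = (a + b + \<alpha> * h0) + Ld - c * Vd - c * (\<alpha> * Vv) + c * \<delta>"
    using assms by (simp add: field_simps)
  also have "\<dots> \<ge> (1/\<epsilon>) * n^2 - n*m + c * ((\<gamma> - \<alpha>) * Vv)"
    using 1 assms(1,3) by (simp add: algebra_simps)
  finally show ?thesis unfolding c_def[symmetric] using 4 5 by linarith
qed

theorem theorem13:
  fixes f0 :: "real^'n \<Rightarrow> real^'n" and g0 :: "real^'n \<Rightarrow> real^'p^'n"
    and f1 :: "real^'n \<Rightarrow> real^'p \<Rightarrow> real^'p" and g1 :: "real^'n \<Rightarrow> real^'p \<Rightarrow> real^'m^'p"
    and h0 :: "real^'n \<Rightarrow> real" and Dh0 :: "(real^'n) \<Rightarrow> ((real^'n) \<Rightarrow>\<^sub>L real)"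
    and k0 :: "real^'n \<Rightarrow> real^'p"
    and k :: "real^'n \<Rightarrow> real^'p \<Rightarrow> real^'m"
    and V :: "real^'n \<Rightarrow> real^'p \<Rightarrow> real"
    and DV :: "((real^'n) \<times> (real^'p)) \<Rightarrow> (((real^'n) \<times> (real^'p)) \<Rightarrow>\<^sub>L real)"
    and \<alpha> \<epsilon> \<gamma>1 \<gamma>2 \<gamma> \<delta> \<mu> :: real
  assumes lip: "locally_lipschitz f0" "locally_lipschitz g0"
      "locally_lipschitz (\<lambda>(q, xi). f1 q xi)" "locally_lipschitz (\<lambda>(q, xi). g1 q xi)"
    and h0_deriv: "\<And>q. (h0 has_derivative blinfun_apply (Dh0 q)) (at q)"
    and h0_C1: "continuous_on UNIV Dh0"
    and k0_C1: "C1_fun k0"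
    and pos: "\<alpha> > 0" "\<epsilon> > 0"
    and cbf: "\<And>q. blinfun_apply (Dh0 q) (f0 q) + lie_g Dh0 g0 q \<bullet> k0 q
                 \<ge> - \<alpha> * h0 q + (1 / \<epsilon>) * (norm (lie_g Dh0 g0 q))\<^sup>2"
    and V_deriv: "\<And>x. ((\<lambda>(q, xi). V q xi) has_derivative blinfun_apply (DV x)) (at x)"
    and V_C1: "continuous_on UNIV DV"
    and V_nonneg: "\<And>q xi. V q xi \<ge> 0"
    and gpos: "\<gamma>1 > 0" "\<gamma>2 > 0" "\<gamma> > 0" "\<delta> > 0"
    and V_bounds: "\<And>q xi. \<gamma>1 * (norm (xi - k0 q))\<^sup>2 \<le> V q xi"
                  "\<And>q xi. V q xi \<le> \<gamma>2 * (norm (xi - k0 q))\<^sup>2"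
    and V_dot: "\<And>q xi. blinfun_apply (DV (q, xi)) (closed_loop f0 g0 f1 g1 k (q, xi))
                   \<le> - \<gamma> * V q xi + \<delta>"
    and mu: "\<mu> > 0"
    and gamma_ge: "\<gamma> \<ge> \<alpha> + \<epsilon> * \<mu> / 4"
  shows "forward_invariant (closed_loop f0 g0 f1 g1 k)
           {(q, xi). h0 q - (1 / (\<mu> * \<gamma>1)) * (V q xi - \<delta> / \<alpha>) \<ge> 0}"
proof -
  define F where "F = closed_loop f0 g0 f1 g1 k"
  define c where "c = 1 / (\<mu> * \<gamma>1)"
  define hh where "hh z = h0 (fst z) - c * (V (fst z) (snd z) - \<delta> / \<alpha>)" for z :: "(real^'n) \<times> (real^'p)"
  define hhD where "hhD z = (\<lambda>v. blinfun_apply (Dh0 (fst z)) (fst v) - c * blinfun_apply (DV z) v)"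
    for z :: "(real^'n) \<times> (real^'p)"
  have Veq: "(\<lambda>(q, xi). V q xi) = (\<lambda>z. V (fst z) (snd z))" by (auto simp: fun_eq_iff)
  have hh_der: "(hh has_derivative hhD z) (at z within S)" for z S
  proof -
    have d1: "((\<lambda>z. h0 (fst z)) has_derivative (\<lambda>v. blinfun_apply (Dh0 (fst z)) (fst v))) (at z within S)"
      by (rule has_derivative_compose[OF has_derivative_fst[OF has_derivative_ident] h0_deriv])
    have d2: "((\<lambda>z. V (fst z) (snd z)) has_derivative blinfun_apply (DV z)) (at z within S)"
      using V_deriv[of z] unfolding Veq by (rule has_derivative_at_withinI)
    have "((\<lambda>z. h0 (fst z) - c * (V (fst z) (snd z) - \<delta> / \<alpha>)) has_derivative
          (\<lambda>v. blinfun_apply (Dh0 (fst z)) (fst v) - c * (blinfun_apply (DV z) v - 0))) (at z within S)"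
      by (intro has_derivative_diff d1 has_derivative_mult_right d2 has_derivative_const)
    thus ?thesis unfolding hh_def[abs_def] hhD_def by simp
  qed
  have pw: "hhD z (F z) + \<alpha> * hh z \<ge> 0" for z
  proof -
    obtain q xi where z: "z = (q, xi)" by fastforce
    define L where "L = lie_g Dh0 g0 q"
    have Fz: "fst (F z) = f0 q + g0 q *v xi" by (simp add: F_def closed_loop_def z)
    have "blinfun_apply (Dh0 q) (fst (F z)) = blinfun_apply (Dh0 q) (f0 q) + (L \<bullet> k0 q + L \<bullet> (xi - k0 q))"
      unfolding Fz blinfun.add_right lie_dot L_def by (simp add: inner_diff_right)
    moreover have "\<bar>L \<bullet> (xi - k0 q)\<bar> \<le> norm L * norm (xi - k0 q)" by (rule Cauchy_Schwarz_ineq2)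
    ultimately show ?thesis
      unfolding hhD_def hh_def z fst_conv snd_conv c_def
      apply (simp only:)
      apply (rule key_ineq[where \<gamma>=\<gamma> and \<epsilon>=\<epsilon> and n="norm L" and m="norm (xi - k0 q)"])
      using cbf[of q] V_dot[of q xi] V_bounds(1)[of xi q] V_nonneg[of q xi] gamma_ge pos gpos mu
      by (auto simp: L_def F_def)
  qed
  show ?thesis
    unfolding forward_invariant_def F_def[symmetric]
  proof (intro allI impI ballI)
    fix x :: "real \<Rightarrow> (real^'n) \<times> (real^'p)" and T t
    assume T: "0 < T" and der: "\<forall>t\<in>{0..<T}. (x has_vector_derivative F (x t)) (at t within {0..<T})"
      and x0: "x 0 \<in> {(q, xi). h0 q - 1 / (\<mu> * \<gamma>1) * (V q xi - \<delta> / \<alpha>) \<ge> 0}"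
      and t: "t \<in> {0..<T}"
    have mem: "x s \<in> {(q, xi). h0 q - 1 / (\<mu> * \<gamma>1) * (V q xi - \<delta> / \<alpha>) \<ge> 0} \<longleftrightarrow> hh (x s) \<ge> 0" for s
      by (cases "x s") (simp add: hh_def c_def)
    define G where "G s = exp (\<alpha> * s) * hh (x s)" for s
    define G' where "G' s = exp (\<alpha> * s) * \<alpha> * hh (x s) + exp (\<alpha> * s) * hhD (x s) (F (x s))" for s
    have Gder: "(G has_field_derivative G' s) (at s within {0..t})" if s: "0 \<le> s" "s \<le> t" for s
    proof -
      have sub: "{0..t} \<subseteq> {0..<T}" using t by auto
      have xd: "(x has_vector_derivative F (x s)) (at s within {0..t})"
        using der s t by (intro has_vector_derivative_within_subset[OF _ sub]) auto
      have "((\<lambda>s. hh (x s)) has_derivative (\<lambda>h. hhD (x s) (h *\<^sub>R F (x s)))) (at s within {0..t})"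
        using has_derivative_compose[OF xd[unfolded has_vector_derivative_def] hh_der] .
      moreover have "(\<lambda>h. hhD (x s) (h *\<^sub>R F (x s))) = (\<lambda>h. hhD (x s) (F (x s)) * h)"
        by (simp add: hhD_def fun_eq_iff blinfun.scaleR_right algebra_simps)
      ultimately have hd: "((\<lambda>s. hh (x s)) has_field_derivative hhD (x s) (F (x s))) (at s within {0..t})"
        by (simp add: has_field_derivative_def)
      have ed: "((\<lambda>s. exp (\<alpha> * s)) has_field_derivative exp (\<alpha> * s) * \<alpha>) (at s within {0..t})"
        by (auto intro!: derivative_eq_intros)
      show ?thesis unfolding G_def[abs_def] G'_def
        using DERIV_mult[OF ed hd] by (simp add: mult.commute)
    qed
    have G'nn: "G' s \<ge> 0" for s
    proof -
      have "G' s = exp (\<alpha> * s) * (hhD (x s) (F (x s)) + \<alpha> * hh (x s))"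
        by (simp add: G'_def algebra_simps)
      thus ?thesis using pw[of "x s"] by simp
    qed
    have "0 \<le> t" using t by simp
    have "\<exists>s\<in>{0..t}. G t - G 0 = G' s * (t - 0)"
      using \<open>0 \<le> t\<close> by (rule mvt_very_simple[of 0 t G "\<lambda>s. (*) (G' s)"])
         (use Gder in \<open>simp add: has_field_derivative_def\<close>)
    then obtain s where "G t - G 0 = G' s * (t - 0)" by blast
    hence "G t \<ge> G 0" using G'nn[of s] \<open>0 \<le> t\<close> by (metis diff_ge_0_iff_ge zero_le_mult_iff)
    moreover have "G 0 \<ge> 0" using x0 mem[of 0] by (simp add: G_def)
    ultimately have "exp (\<alpha> * t) * hh (x t) \<ge> 0" by (simp add: G_def)
    hence "hh (x t) \<ge> 0" by (simp add: zero_le_mult_iff)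
    thus "x t \<in> {(q, xi). h0 q - 1 / (\<mu> * \<gamma>1) * (V q xi - \<delta> / \<alpha>) \<ge> 0}" using mem by simp
  qed
qed

end
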